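(* Let $X_1,\ldots,X_n$ be (arbitrary, possibly dependent) $\{0,1\}$-valued random variables. Let $K\subsetneq[n]$ and $a_K\in\{0,1\}^K$ with $\Pr[X_K=a_K]>0$. Then there exists $i\in[n]\setminus K$ such that either $X_i$ is almost surely constant conditioned on $X_K=a_K$, or both events $\{X_K=a_K, X_i=0\}$ and $\{X_K=a_K,X_i=1\}$ have positive probability and $$\sum_{\ell\in[n]\setminus(K\cup\{i\})}\Big(\mathbb{E}[X_\ell\mid X_K=a_K, X_i=0]-\mathbb{E}[X_\ell\mid X_K=a_K, X_i=1]\Big)\le 1.$$
   Context: For $S\subseteq[n]$, $X_S\in\{0,1\}^S$ denotes the tuple $(X_i)_{i\in S}$. *)

theory Defs
  imports "HOL-Probability.Probability"
begin

text \<open>The event X_K = a_K, for {0,1}-valued random variables encoded as bool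
  (True = 1, False = 0).\<close>
definition assign_event :: "'a measure \<Rightarrow> (nat \<Rightarrow> 'a \<Rightarrow> bool) \<Rightarrow> nat set \<Rightarrow> (nat \<Rightarrow> bool) \<Rightarrow> 'a set" where
  "assign_event M X K a = {\<omega> \<in> space M. \<forall>k\<in>K. X k \<omega> = a k}"

definition cond_exp_event :: "'a measure \<Rightarrow> 'a set \<Rightarrow> ('a \<Rightarrow> real) \<Rightarrow> real" where
  "cond_exp_event M B f = (\<integral>\<omega>. indicator B \<omega> * f \<omega> \<partial>M) / measure M B"

end

theory Submission
  imports Defs
begin

lemma bint_aux:
  assumes "finite_measure M" "g \<in> borel_measurable M" "\<And>\<omega>. \<bar>g \<omega>\<bar> \<le> (C::real)"
  shows "integrable M g"
  using assms by (intro finite_measure.integrable_const_bound[where B=C]) auto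

lemma alg_aux:
  fixes P q T U :: real
  assumes "0 < q" "0 < P - q" "(U - T) / (P - q) - (T - q) / q > 1"
  shows "P * T - q * U < 0"
proof -
  have "(T - q) / q = T / q - 1" using assms(1) by (simp add: field_simps)
  then have "(U - T) / (P - q) > T / q" using assms(3) by simp
  then have "q * (U - T) > T * (P - q)" using assms(1,2) by (simp add: field_simps)
  then show ?thesis by (simp add: algebra_simps)
qed

theorem mainTheorem2:
  fixes M :: "'a measure" and X :: "nat \<Rightarrow> 'a \<Rightarrow> bool" and n :: nat
    and K :: "nat set" and a :: "nat \<Rightarrow> bool"
  assumes "prob_space M"
    and "\<And>i. i \<in> {1..n} \<Longrightarrow> X i \<in> M \<rightarrow>\<^sub>M count_space UNIV"
    and "K \<subset> {1..n}"
    and "measure M (assign_event M X K a) > 0"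
  shows "\<exists>i \<in> {1..n} - K.
     (\<exists>c. AE \<omega> in M. \<omega> \<in> assign_event M X K a \<longrightarrow> X i \<omega> = c)
   \<or> (measure M (assign_event M X K a \<inter> {\<omega>. X i \<omega> = False}) > 0
      \<and> measure M (assign_event M X K a \<inter> {\<omega>. X i \<omega> = True}) > 0
      \<and> (\<Sum>l \<in> {1..n} - (K \<union> {i}).
           cond_exp_event M (assign_event M X K a \<inter> {\<omega>. X i \<omega> = False}) (\<lambda>\<omega>. of_bool (X l \<omega>))
         - cond_exp_event M (assign_event M X K a \<inter> {\<omega>. X i \<omega> = True}) (\<lambda>\<omega>. of_bool (X l \<omega>))) \<le> 1)"
proof (rule ccontr)
  interpret prob_space M by fact
  assume contra: "\<not> ?thesis"
  define J where "J = {1..n} - K"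
  define B where "B = assign_event M X K a"
  define P where "P = measure M B"
  define x where "x = (\<lambda>l \<omega>. of_bool (X l \<omega>) :: real)"
  define h where "h = (indicator B :: 'a \<Rightarrow> real)"
  define S where "S = (\<lambda>\<omega>. \<Sum>l\<in>J. x l \<omega>)"
  define I where "I = (\<lambda>g. \<integral>\<omega>. h \<omega> * g \<omega> \<partial>M)"
  have finJ: "finite J" unfolding J_def by auto
  have Jne: "J \<noteq> {}" using assms(3) unfolding J_def by auto
  have finK: "finite K" using assms(3) finite_subset by blast
  have P0: "P > 0" using assms(4) unfolding P_def B_def .
  have xmeas: "x l \<in> borel_measurable M" if "l \<in> {1..n}" for l
  proof -
    have "(\<lambda>b. of_bool b :: real) \<in> count_space UNIV \<rightarrow>\<^sub>M borel" by simp
    from measurable_comp[OF assms(2)[OF that] this] show ?thesis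
      unfolding x_def by (simp add: comp_def)
  qed
  have Bsets: "B \<in> sets M"
  proof -
    have "{\<omega>\<in>space M. X k \<omega> = a k} \<in> sets M" if "k \<in> K" for k
    proof -
      have "k \<in> {1..n}" using that assms(3) by auto
      from measurable_sets[OF assms(2)[OF this], of "{a k}"]
      show ?thesis by (simp add: vimage_def Int_def conj_commute)
    qed
    then show ?thesis unfolding B_def assign_event_def
      by (intro sets.sets_Collect_finite_All finK) auto
  qed
  have hmeas: "h \<in> borel_measurable M" unfolding h_def using Bsets by simp
  have Sb: "0 \<le> S \<omega> \<and> S \<omega> \<le> real (card J)" for \<omega>
    unfolding S_def x_def using sum_bounded_above[of J "\<lambda>l. of_bool (X l \<omega>)::real" 1] by (auto intro: sum_nonneg)
  have Smeas: "S \<in> borel_measurable M" unfolding S_def using xmeas J_def by auto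
  have int: "integrable M (\<lambda>\<omega>. h \<omega> * g \<omega>)" if "g \<in> borel_measurable M" "\<And>\<omega>. \<bar>g \<omega>\<bar> \<le> C" for g C
    apply (rule bint_aux[where C=C])
    subgoal by unfold_locales
    subgoal using that hmeas by simp
    subgoal for \<omega> using that(2)[of \<omega>] unfolding h_def by (auto simp: indicator_def)
    done
  have xb: "0 \<le> x l \<omega> \<and> x l \<omega> \<le> 1" for l \<omega> unfolding x_def by auto
  have Jn: "J \<subseteq> {1..n}" unfolding J_def by auto
  have BM: "B \<subseteq> space M" unfolding B_def assign_event_def by auto
  have ix: "integrable M (\<lambda>\<omega>. h \<omega> * x l \<omega>)" if "l \<in> J" for l
    using that Jn xb xmeas by (intro int[of _ 1]) auto
  have ixx: "integrable M (\<lambda>\<omega>. h \<omega> * (x i \<omega> * x l \<omega>))" if "l \<in> J" "i \<in> J" for i l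
  proof (intro int[of _ 1])
    have "x i \<in> borel_measurable M" "x l \<in> borel_measurable M" using that Jn xmeas by auto
    then show "(\<lambda>\<omega>. x i \<omega> * x l \<omega>) \<in> borel_measurable M" by simp
    fix \<omega> show "\<bar>x i \<omega> * x l \<omega>\<bar> \<le> 1" using xb[of i \<omega>] xb[of l \<omega>] by (simp add: abs_mult mult_le_one)
  qed
  have iS: "integrable M (\<lambda>\<omega>. h \<omega> * S \<omega>)"
    using Sb Smeas by (intro int[of _ "card J"]) auto
  have ixS: "integrable M (\<lambda>\<omega>. h \<omega> * (x i \<omega> * S \<omega>))" if "i \<in> J" for i
  proof (intro int[of _ "card J"])
    have "x i \<in> borel_measurable M" using that Jn xmeas by auto
    then show "(\<lambda>\<omega>. x i \<omega> * S \<omega>) \<in> borel_measurable M" using Smeas by simp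
    fix \<omega> show "\<bar>x i \<omega> * S \<omega>\<bar> \<le> real (card J)"
      using xb[of i \<omega>] Sb[of \<omega>] using mult_left_le_one_le[of "S \<omega>" "x i \<omega>"] by (simp add: abs_mult)
  qed
  have iSS: "integrable M (\<lambda>\<omega>. h \<omega> * (S \<omega> * S \<omega>))"
  proof (intro int[of _ "card J * card J"])
    show "(\<lambda>\<omega>. S \<omega> * S \<omega>) \<in> borel_measurable M" using Smeas by auto
    fix \<omega> show "\<bar>S \<omega> * S \<omega>\<bar> \<le> real (card J * card J)"
      using Sb[of \<omega>] by (simp add: abs_mult mult_mono)
  qed
  have i1: "integrable M h" using int[of "\<lambda>_. 1" 1] by simp
  have I1: "I (\<lambda>_. 1) = P" unfolding I_def P_def h_def using BM
    by (simp add: Int_absorb2)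
  define q where "q = (\<lambda>i. I (x i))"
  define T where "T = (\<lambda>i. I (\<lambda>\<omega>. x i \<omega> * S \<omega>))"
  define U where "U = I S"
  have ind1: "indicator (B \<inter> {\<omega>. X i \<omega> = True}) \<omega> = h \<omega> * x i \<omega>" for i \<omega>
    unfolding h_def x_def by (auto simp: indicator_def)
  have ind0: "indicator (B \<inter> {\<omega>. X i \<omega> = False}) \<omega> = h \<omega> * (1 - x i \<omega>)" for i \<omega>
    unfolding h_def x_def by (auto simp: indicator_def)
  have m1: "measure M (B \<inter> {\<omega>. X i \<omega> = True}) = q i" for i
  proof -
    have "B \<inter> {\<omega>. X i \<omega> = True} \<inter> space M = B \<inter> {\<omega>. X i \<omega> = True}" using BM by blast
    then have "measure M (B \<inter> {\<omega>. X i \<omega> = True}) = integral\<^sup>L M (indicator (B \<inter> {\<omega>. X i \<omega> = True}))"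
      by simp
    also have "\<dots> = q i" unfolding q_def I_def ind1 ..
    finally show ?thesis .
  qed
  have m0: "measure M (B \<inter> {\<omega>. X i \<omega> = False}) = P - q i" if "i \<in> J" for i
  proof -
    have "B \<inter> {\<omega>. X i \<omega> = False} \<inter> space M = B \<inter> {\<omega>. X i \<omega> = False}" using BM by blast
    then have "measure M (B \<inter> {\<omega>. X i \<omega> = False}) = integral\<^sup>L M (indicator (B \<inter> {\<omega>. X i \<omega> = False}))"
      by simp
    also have "\<dots> = (\<integral>\<omega>. h \<omega> - h \<omega> * x i \<omega> \<partial>M)" unfolding ind0 by (simp add: algebra_simps)
    also have "\<dots> = P - q i" using i1 ix[OF that] I1 unfolding q_def I_def by simp
    finally show ?thesis .
  qed
  have c1: "cond_exp_event M (B \<inter> {\<omega>. X i \<omega> = True}) g = I (\<lambda>\<omega>. x i \<omega> * g \<omega>) / q i" for i g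
    unfolding cond_exp_event_def m1 ind1 I_def by (simp add: mult.assoc)
  have c0: "cond_exp_event M (B \<inter> {\<omega>. X i \<omega> = False}) g = I (\<lambda>\<omega>. (1 - x i \<omega>) * g \<omega>) / (P - q i)"
    if "i \<in> J" for i g
    unfolding cond_exp_event_def m0[OF that] ind0 I_def by (simp add: mult.assoc)
  have Ilin_sum: "(\<Sum>l\<in>A. I (f l)) = I (\<lambda>\<omega>. \<Sum>l\<in>A. f l \<omega>)"
    if "\<And>l. l \<in> A \<Longrightarrow> integrable M (\<lambda>\<omega>. h \<omega> * f l \<omega>)" for A f
    unfolding I_def using that by (simp add: integral_sum[symmetric] sum_distrib_left)
  have Idiff: "I (\<lambda>\<omega>. f \<omega> - g \<omega>) = I f - I g"
    if "integrable M (\<lambda>\<omega>. h \<omega> * f \<omega>)" "integrable M (\<lambda>\<omega>. h \<omega> * g \<omega>)" for f g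
  proof -
    have "I (\<lambda>\<omega>. f \<omega> - g \<omega>) = (\<integral>\<omega>. h \<omega> * f \<omega> - h \<omega> * g \<omega> \<partial>M)"
      unfolding I_def by (simp add: right_diff_distrib)
    also have "\<dots> = I f - I g" unfolding I_def using that by simp
    finally show ?thesis .
  qed
  have Esets: "B \<inter> {\<omega>. X i \<omega> = c} \<in> sets M" if "i \<in> J" for i c
  proof -
    have "B \<inter> {\<omega>. X i \<omega> = c} = B \<inter> (X i -` {c} \<inter> space M)" using BM by auto
    moreover have "X i -` {c} \<inter> space M \<in> sets M"
      using measurable_sets[OF assms(2), of i "{c}"] that Jn by auto
    ultimately show ?thesis using Bsets by auto
  qed
  have sumrem: "(\<Sum>l\<in>J-{i}. x l \<omega>) = S \<omega> - x i \<omega>" if "i \<in> J" for i \<omega>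
    unfolding S_def using that finJ by (simp add: sum_diff1)
  have xsq: "x i \<omega> * x i \<omega> = x i \<omega>" for i \<omega> unfolding x_def by simp
  have sumT: "(\<Sum>i\<in>J. T i) = I (\<lambda>\<omega>. S \<omega> * S \<omega>)"
    unfolding T_def using ixS by (subst Ilin_sum) (auto simp: S_def sum_distrib_right)
  have sumq: "(\<Sum>i\<in>J. q i) = U"
    unfolding q_def U_def using ix by (subst Ilin_sum) (auto simp: S_def)
  have neg: "P * T i - q i * U < 0" if iJ: "i \<in> J" for i
  proof -
    have iK: "i \<in> {1..n} - K" using iJ unfolding J_def .
    have eqset: "{1..n} - (K \<union> {i}) = J - {i}" unfolding J_def by auto
    have nP: "\<not> ((\<exists>c. AE \<omega> in M. \<omega> \<in> B \<longrightarrow> X i \<omega> = c)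
     \<or> (measure M (B \<inter> {\<omega>. X i \<omega> = False}) > 0
      \<and> measure M (B \<inter> {\<omega>. X i \<omega> = True}) > 0
      \<and> (\<Sum>l \<in> J - {i}.
           cond_exp_event M (B \<inter> {\<omega>. X i \<omega> = False}) (x l)
         - cond_exp_event M (B \<inter> {\<omega>. X i \<omega> = True}) (x l)) \<le> 1))"
      unfolding eqset[symmetric] B_def x_def
      apply (rule contrapos_nn[OF contra])
      apply (rule bexI[where x=i])
       apply assumption
      apply (rule iK)
      done
    have nc: "\<not> (\<exists>c. AE \<omega> in M. \<omega> \<in> B \<longrightarrow> X i \<omega> = c)"
      using nP by (rule contrapos_nn) (rule disjI1)
    have nb: "\<not> (measure M (B \<inter> {\<omega>. X i \<omega> = False}) > 0
      \<and> measure M (B \<inter> {\<omega>. X i \<omega> = True}) > 0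
      \<and> (\<Sum>l \<in> J - {i}.
           cond_exp_event M (B \<inter> {\<omega>. X i \<omega> = False}) (x l)
         - cond_exp_event M (B \<inter> {\<omega>. X i \<omega> = True}) (x l)) \<le> 1)"
      using nP by (rule contrapos_nn) (rule disjI2)
    have pos: "measure M (B \<inter> {\<omega>. X i \<omega> = c}) > 0" for c
    proof (rule ccontr)
      assume "\<not> ?thesis"
      then have "measure M (B \<inter> {\<omega>. X i \<omega> = c}) = 0" using measure_nonneg[of M] by (meson not_less order_antisym)
      then have "B \<inter> {\<omega>. X i \<omega> = c} \<in> null_sets M" using Esets[OF iJ, of c]
        by (intro null_setsI) (auto simp: emeasure_eq_measure)
      then have "AE \<omega> in M. \<omega> \<in> B \<longrightarrow> X i \<omega> = (\<not> c)"
        by (rule AE_I') auto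
      then show False using nc by blast
    qed
    have q1: "q i > 0" using pos[of True] m1 by simp
    have q0: "P - q i > 0" using pos[of False] m0[OF iJ] by simp
    have s0: "(\<Sum>l\<in>J-{i}. I (\<lambda>\<omega>. (1 - x i \<omega>) * x l \<omega>)) = U - T i"
    proof -
      have "(\<Sum>l\<in>J-{i}. I (\<lambda>\<omega>. (1 - x i \<omega>) * x l \<omega>)) = I (\<lambda>\<omega>. \<Sum>l\<in>J-{i}. (1 - x i \<omega>) * x l \<omega>)"
      proof (rule Ilin_sum)
        fix l assume l: "l \<in> J - {i}"
        have "integrable M (\<lambda>\<omega>. h \<omega> * x l \<omega> - h \<omega> * (x i \<omega> * x l \<omega>))"
          using ix ixx l iJ by auto
        then show "integrable M (\<lambda>\<omega>. h \<omega> * ((1 - x i \<omega>) * x l \<omega>))"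
          by (simp add: algebra_simps)
      qed
      also have "\<dots> = I (\<lambda>\<omega>. S \<omega> - x i \<omega> * S \<omega>)"
      proof -
        have "(\<Sum>l\<in>J-{i}. (1 - x i \<omega>) * x l \<omega>) = S \<omega> - x i \<omega> * S \<omega>" for \<omega>
        proof -
          have "(\<Sum>l\<in>J-{i}. (1 - x i \<omega>) * x l \<omega>) = (1 - x i \<omega>) * (S \<omega> - x i \<omega>)"
            by (simp only: sum_distrib_left[symmetric] sumrem[OF iJ])
          also have "\<dots> = S \<omega> - x i \<omega> * S \<omega> - x i \<omega> + x i \<omega> * x i \<omega>" by (simp add: algebra_simps)
          finally show ?thesis using xsq[of i \<omega>] by simp
        qed
        then show ?thesis by simp
      qed
      also have "\<dots> = U - T i" unfolding U_def T_def using iS ixS[OF iJ] by (rule Idiff)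
      finally show ?thesis .
    qed
    have s1: "(\<Sum>l\<in>J-{i}. I (\<lambda>\<omega>. x i \<omega> * x l \<omega>)) = T i - q i"
    proof -
      have "(\<Sum>l\<in>J-{i}. I (\<lambda>\<omega>. x i \<omega> * x l \<omega>)) = I (\<lambda>\<omega>. \<Sum>l\<in>J-{i}. x i \<omega> * x l \<omega>)"
        using ixx iJ by (intro Ilin_sum) auto
      also have "\<dots> = I (\<lambda>\<omega>. x i \<omega> * S \<omega> - x i \<omega>)"
      proof -
        have "(\<Sum>l\<in>J-{i}. x i \<omega> * x l \<omega>) = x i \<omega> * S \<omega> - x i \<omega>" for \<omega>
        proof -
          have "(\<Sum>l\<in>J-{i}. x i \<omega> * x l \<omega>) = x i \<omega> * (S \<omega> - x i \<omega>)"
            by (simp only: sum_distrib_left[symmetric] sumrem[OF iJ])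
          also have "\<dots> = x i \<omega> * S \<omega> - x i \<omega> * x i \<omega>" by (simp add: algebra_simps)
          finally show ?thesis using xsq[of i \<omega>] by simp
        qed
        then show ?thesis by simp
      qed
      also have "\<dots> = T i - q i" unfolding q_def T_def using ixS[OF iJ] ix[OF iJ] by (rule Idiff)
      finally show ?thesis .
    qed
    have "(\<Sum>l \<in> J - {i}. cond_exp_event M (B \<inter> {\<omega>. X i \<omega> = False}) (x l)
         - cond_exp_event M (B \<inter> {\<omega>. X i \<omega> = True}) (x l))
        = (U - T i) / (P - q i) - (T i - q i) / q i"
      unfolding c0[OF iJ] c1 sum_subtractf sum_divide_distrib[symmetric] s0 s1 ..
    moreover have "\<not> ((\<Sum>l \<in> J - {i}. cond_exp_event M (B \<inter> {\<omega>. X i \<omega> = False}) (x l)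
         - cond_exp_event M (B \<inter> {\<omega>. X i \<omega> = True}) (x l)) \<le> 1)"
      using nb pos[of False] pos[of True] by blast
    ultimately have "(U - T i) / (P - q i) - (T i - q i) / q i > 1"
      by linarith
    then show ?thesis using alg_aux q1 q0 by blast
  qed
  have "(\<Sum>i\<in>J. P * T i - q i * U) < (\<Sum>i\<in>J. 0)"
    using neg finJ Jne by (intro sum_strict_mono) auto
  then have lt: "P * I (\<lambda>\<omega>. S \<omega> * S \<omega>) - U * U < 0"
    by (simp add: sum_subtractf sum_distrib_left[symmetric] sum_distrib_right[symmetric] sumT sumq)
  have "0 \<le> I (\<lambda>\<omega>. (P * S \<omega> - U)^2)" unfolding I_def h_def by (intro Bochner_Integration.integral_nonneg) auto
  also have "I (\<lambda>\<omega>. (P * S \<omega> - U)^2)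
     = (\<integral>\<omega>. P^2 * (h \<omega> * (S \<omega> * S \<omega>)) - (2*P*U) * (h \<omega> * S \<omega>) + U^2 * h \<omega> \<partial>M)"
    unfolding I_def by (rule Bochner_Integration.integral_cong) (simp_all add: power2_eq_square algebra_simps)
  also have "\<dots> = P^2 * I (\<lambda>\<omega>. S \<omega> * S \<omega>) - (2*P*U) * U + U^2 * P"
  proof -
    have a: "integrable M (\<lambda>\<omega>. P^2 * (h \<omega> * (S \<omega> * S \<omega>)))" using iSS by simp
    have b: "integrable M (\<lambda>\<omega>. (2*P*U) * (h \<omega> * S \<omega>))" using iS by simp
    have c: "integrable M (\<lambda>\<omega>. U^2 * h \<omega>)" using i1 by simp
    have "(\<integral>\<omega>. P^2 * (h \<omega> * (S \<omega> * S \<omega>)) - (2*P*U) * (h \<omega> * S \<omega>) + U^2 * h \<omega> \<partial>M)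
       = (\<integral>\<omega>. P^2 * (h \<omega> * (S \<omega> * S \<omega>)) - (2*P*U) * (h \<omega> * S \<omega>) \<partial>M) + (\<integral>\<omega>. U^2 * h \<omega> \<partial>M)"
      using a b c by (intro Bochner_Integration.integral_add) auto
    also have "\<dots> = (\<integral>\<omega>. P^2 * (h \<omega> * (S \<omega> * S \<omega>)) \<partial>M) - (\<integral>\<omega>. (2*P*U) * (h \<omega> * S \<omega>) \<partial>M) + (\<integral>\<omega>. U^2 * h \<omega> \<partial>M)"
      using a b by (subst Bochner_Integration.integral_diff) auto
    also have "\<dots> = P^2 * I (\<lambda>\<omega>. S \<omega> * S \<omega>) - (2*P*U) * U + U^2 * P"
      using I1 unfolding I_def U_def by simp
    finally show ?thesis .
  qed
  finally have "0 \<le> P * (P * I (\<lambda>\<omega>. S \<omega> * S \<omega>) - U * U)"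
    by (simp add: power2_eq_square algebra_simps)
  with P0 lt show False by (simp add: mult_less_0_iff zero_le_mult_iff)
qed

end
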